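(* Let $N=\{1,\dots,n\}$ and let $F:2^N\to\mathbb{R}$ be quasi-submodular. For the sequences $(X_t),(Y_t)$ generated by the maximization procedure (described in the context), at every iteration $t$ other than the last one (i.e., whenever $X_{t+1}\ne X_t$ or $Y_{t+1}\ne Y_t$), we have $F(X_{t+1})>F(X_t)$ or $F(Y_{t+1})>F(Y_t)$.
   Context: For $A\subseteq N$ and $i\in N$, write $A+i=A\cup\{i\}$, $A-i=A\setminus\{i\}$, and $F(i\mid A)=F(A+i)-F(A)$. $F$ is quasi-submodular if for all $X,Y\subseteq N$ both hold: $F(X\cap Y)\ge F(X)\Rightarrow F(Y)\ge F(X\cup Y)$, and $F(X\cap Y)>F(X)\Rightarrow F(Y)>F(X\cup Y)$. Maximization procedure: set $X_0=\emptyset$, $Y_0=N$; for $t=0,1,2,\dots$: let $U_t=\{u\in Y_t\setminus X_t: F(u\mid Y_t-u)>0\}$ and $X_{t+1}=X_t\cup U_t$; let $D_t=\{d\in Y_t\setminus X_t: F(d\mid X_t)<0\}$ and $Y_{t+1}=Y_t\setminus D_t$; if $X_{t+1}=X_t$ and $Y_{t+1}=Y_t$, stop and output $[X_t,Y_t]$; otherwise continue with $t+1$. *)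

theory Defs
  imports Complex_Main
begin

definition marg :: "(nat set \<Rightarrow> real) \<Rightarrow> nat \<Rightarrow> nat set \<Rightarrow> real" where
  "marg F i A = F (insert i A) - F A"

definition quasi_submodular :: "nat set \<Rightarrow> (nat set \<Rightarrow> real) \<Rightarrow> bool" where
  "quasi_submodular N F \<longleftrightarrow>
     (\<forall>X Y. X \<subseteq> N \<longrightarrow> Y \<subseteq> N \<longrightarrow>
        (F (X \<inter> Y) \<ge> F X \<longrightarrow> F Y \<ge> F (X \<union> Y)) \<and>
        (F (X \<inter> Y) > F X \<longrightarrow> F Y > F (X \<union> Y)))"

definition max_step :: "(nat set \<Rightarrow> real) \<Rightarrow> nat set \<times> nat set \<Rightarrow> nat set \<times> nat set" where
  "max_step F XY = (let X = fst XY; Y = snd XY;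
      U = {u \<in> Y - X. marg F u (Y - {u}) > 0};
      D = {d \<in> Y - X. marg F d X < 0}
    in (X \<union> U, Y - D))"

text \<open>The pair (X_t, Y_t) produced by the procedure, started at (empty, N).
  Once the procedure stops (a fixed point is reached), the sequence stays constant.\<close>
definition max_seq :: "nat set \<Rightarrow> (nat set \<Rightarrow> real) \<Rightarrow> nat \<Rightarrow> nat set \<times> nat set" where
  "max_seq N F t = (max_step F ^^ t) ({}, N)"

end

theory Submission
  imports Defs
begin

lemma qsD1: "quasi_submodular N F \<Longrightarrow> X \<subseteq> N \<Longrightarrow> Y \<subseteq> N \<Longrightarrow> F (X \<inter> Y) \<ge> F X \<Longrightarrow> F Y \<ge> F (X \<union> Y)"
  unfolding quasi_submodular_def by blast
lemma qsD2: "quasi_submodular N F \<Longrightarrow> X \<subseteq> N \<Longrightarrow> Y \<subseteq> N \<Longrightarrow> F (X \<inter> Y) > F X \<Longrightarrow> F Y > F (X \<union> Y)"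
  unfolding quasi_submodular_def by blast

lemma L1:
  assumes q: "quasi_submodular N F" and "Y \<subseteq> N" "u \<in> Y" "X \<subseteq> Y - {u}" "F Y > F (Y - {u})"
  shows "F (insert u X) > F X"
proof (rule ccontr)
  assume "\<not> ?thesis"
  moreover have "insert u X \<inter> (Y - {u}) = X" using assms by auto
  ultimately have "F (insert u X \<inter> (Y - {u})) \<ge> F (insert u X)" by simp
  hence "F (Y - {u}) \<ge> F (insert u X \<union> (Y - {u}))"
    using qsD1[OF q, of "insert u X" "Y - {u}"] assms by auto
  moreover have "insert u X \<union> (Y - {u}) = Y" using assms by auto
  ultimately show False using assms by auto
qed

lemma L2:
  assumes q: "quasi_submodular N F" and "Z \<subseteq> N" "d \<in> Z" "X \<subseteq> Z - {d}" "F (insert d X) < F X"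
  shows "F (Z - {d}) > F Z"
proof -
  have i: "insert d X \<inter> (Z - {d}) = X" using assms by auto
  have u: "insert d X \<union> (Z - {d}) = Z" using assms by auto
  show ?thesis using qsD2[OF q, of "insert d X" "Z - {d}"] assms i u by auto
qed

lemma L3:
  assumes "finite U" "U \<noteq> {}"
  shows "quasi_submodular N F \<Longrightarrow> Y \<subseteq> N \<Longrightarrow> X \<subseteq> Y \<Longrightarrow> U \<subseteq> Y - X \<Longrightarrow>
     \<forall>u\<in>U. F Y > F (Y - {u}) \<Longrightarrow> F (X \<union> U) > F X"
  using assms
proof (induction U rule: finite_ne_induct)
  case (singleton u)
  then show ?case using L1[of N F Y u X] by auto
next
  case (insert u U)
  have a: "F (X \<union> U) > F X" using insert by auto
  have "F (insert u (X \<union> U)) > F (X \<union> U)"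
    using L1[of N F Y u "X \<union> U"] insert by auto
  then show ?case using a by auto
qed

lemma L4:
  assumes "finite D" "D \<noteq> {}"
  shows "quasi_submodular N F \<Longrightarrow> Y \<subseteq> N \<Longrightarrow> X \<subseteq> Y \<Longrightarrow> D \<subseteq> Y - X \<Longrightarrow>
     \<forall>d\<in>D. F (insert d X) < F X \<Longrightarrow> F (Y - D) > F Y"
  using assms
proof (induction D rule: finite_ne_induct)
  case (singleton d)
  then show ?case using L2[of N F Y d X] by auto
next
  case (insert d D)
  have a: "F (Y - D) > F Y" using insert by auto
  have "F (Y - D - {d}) > F (Y - D)"
    using L2[of N F "Y - D" d X] insert by auto
  moreover have "Y - insert d D = Y - D - {d}" by auto
  ultimately show ?case using a by auto
qed

lemma margY: "u \<in> Y \<Longrightarrow> marg F u (Y - {u}) = F Y - F (Y - {u})"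
  unfolding marg_def by (simp add: insert_absorb)

lemma inv:
  assumes q: "quasi_submodular N F"
  shows "fst (max_seq N F t) \<subseteq> snd (max_seq N F t) \<and> snd (max_seq N F t) \<subseteq> N"
proof (induction t)
  case 0
  then show ?case by (simp add: max_seq_def)
next
  case (Suc t)
  obtain X Y where XY: "max_seq N F t = (X, Y)" by fastforce
  have s: "max_seq N F (Suc t) = max_step F (X, Y)" using XY by (simp add: max_seq_def)
  have h: "X \<subseteq> Y" "Y \<subseteq> N" using Suc XY by auto
  have disj: "\<And>u. u \<in> Y - X \<Longrightarrow> marg F u (Y - {u}) > 0 \<Longrightarrow> \<not> marg F u X < 0"
  proof -
    fix u assume a: "u \<in> Y - X" "marg F u (Y - {u}) > 0"
    have "F (insert u X) > F X" using L1[OF q h(2), of u X] a h margY[of u Y F] by auto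
    thus "\<not> marg F u X < 0" unfolding marg_def by auto
  qed
  show ?case unfolding s max_step_def Let_def using h disj by auto
qed

theorem lemma6:
  fixes n :: nat and F :: "nat set \<Rightarrow> real" and t :: nat
  assumes "quasi_submodular {1..n} F"
    and "fst (max_seq {1..n} F (Suc t)) \<noteq> fst (max_seq {1..n} F t)
         \<or> snd (max_seq {1..n} F (Suc t)) \<noteq> snd (max_seq {1..n} F t)"
  shows "F (fst (max_seq {1..n} F (Suc t))) > F (fst (max_seq {1..n} F t))
         \<or> F (snd (max_seq {1..n} F (Suc t))) > F (snd (max_seq {1..n} F t))"
proof -
  define N :: "nat set" where "N = {1..n}"
  have q: "quasi_submodular N F" using assms(1) N_def by simp
  obtain X Y where XY: "max_seq N F t = (X, Y)" by fastforce
  have s: "max_seq N F (Suc t) = max_step F (X, Y)" using XY by (simp add: max_seq_def)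
  have h: "X \<subseteq> Y" "Y \<subseteq> N" using inv[OF q, of t] XY by auto
  have fin: "finite Y" using h(2) N_def finite_subset by auto
  define U where "U = {u \<in> Y - X. marg F u (Y - {u}) > 0}"
  define D where "D = {d \<in> Y - X. marg F d X < 0}"
  have st: "max_step F (X, Y) = (X \<union> U, Y - D)" unfolding max_step_def Let_def U_def D_def by simp
  have ch: "X \<union> U \<noteq> X \<or> Y - D \<noteq> Y" using assms(2) s st XY N_def by auto
  show ?thesis
  proof (cases "X \<union> U \<noteq> X")
    case True
    hence ne: "U \<noteq> {}" by auto
    have "F (X \<union> U) > F X"
      by (rule L3[OF _ ne q h(2) h(1)]) (use fin U_def margY in auto)
    then show ?thesis using s st XY N_def by auto
  next
    case False
    hence "Y - D \<noteq> Y" using ch by auto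
    hence ne: "D \<noteq> {}" by auto
    have "F (Y - D) > F Y"
      by (rule L4[OF _ ne q h(2) h(1)]) (use fin D_def marg_def in auto)
    then show ?thesis using s st XY N_def by auto
  qed
qed

end
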